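(* Let $k$ and $N$ be positive integers and let $\varepsilon=\varepsilon(k,N)\in(0,1/2]$. Set $\kappa=\lfloor 1/\varepsilon\rfloor+1$ and $$V(k)=\max\Big\{\frac{\kappa^{2k-2}}{2}\Big(\varepsilon-\frac1\kappa\Big)^{-1},\ \kappa^{k-1}+\varepsilon\Big\}.$$ If $n_1,\ldots,n_k$ are nonnegative integers with $n_1<n_2<\cdots<n_k\le N$ and $n_k\ge V(k)$, then there exists an integer $$d\in\Big(\frac{n_k}{\kappa^{k-1}+\varepsilon},\ \frac{n_k}{1-\varepsilon}\Big)$$ such that $n_j \bmod d \in[0,\varepsilon d)\cup((1-\varepsilon)d,d)$ for every $j\in\{1,\ldots,k\}$.
   Context: For an integer $n$ and positive integer $d$, $n\bmod d$ denotes the unique $a\in\{0,1,\ldots,d-1\}$ with $n\equiv a\pmod d$. *)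

theory Defs
  imports Complex_Main
begin

definition kappa :: "real \<Rightarrow> nat" where
  "kappa \<epsilon> = nat \<lfloor>1 / \<epsilon>\<rfloor> + 1"

definition V :: "real \<Rightarrow> nat \<Rightarrow> real" where
  "V \<epsilon> k = max ((real (kappa \<epsilon>) ^ (2*k - 2) / 2) * inverse (\<epsilon> - 1 / real (kappa \<epsilon>)))
                   (real (kappa \<epsilon>) ^ (k - 1) + \<epsilon>)"

end

theory Submission
  imports Defs "HOL-Library.FuncSet"
begin

lemma floor_close:
  fixes x y K :: real
  assumes "K > 0" "\<lfloor>K*x\<rfloor> = \<lfloor>K*y\<rfloor>"
  shows "\<bar>x - y\<bar> < 1/K"
proof -
  have "\<bar>K*x - K*y\<bar> < 1"
    using of_int_floor_le[of "K*x"] of_int_floor_le[of "K*y"]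
      real_of_int_floor_add_one_gt[of "K*x"] real_of_int_floor_add_one_gt[of "K*y"] assms(2)
    by linarith
  then have "K * \<bar>x - y\<bar> < 1" using assms(1)
    by (metis abs_mult abs_of_pos right_diff_distrib)
  then show ?thesis using assms(1) by (simp add: field_simps mult.commute)
qed

lemma mod_lemma:
  fixes a d p :: int and u \<epsilon> :: real
  assumes "d > 0" "real_of_int a = real_of_int d * (real_of_int p + u)" "\<bar>u\<bar> < \<epsilon>" "\<epsilon> \<le> 1/2"
  shows "(0 \<le> real_of_int (a mod d) \<and> real_of_int (a mod d) < \<epsilon> * d)
       \<or> ((1 - \<epsilon>) * d < real_of_int (a mod d) \<and> real_of_int (a mod d) < d)"
proof (cases "u \<ge> 0")
  case True
  have s: "real_of_int (a - d*p) = d*u" using assms(2) by (simp add: algebra_simps)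
  have dpos: "real_of_int d > 0" using assms(1) by simp
  have "real_of_int (a - d*p) \<ge> 0" using s True dpos by simp
  then have s0: "a - d*p \<ge> 0" by linarith
  have "d*u < d*\<epsilon>" using True assms(3) dpos by simp
  have lt: "real_of_int d * u < d" using assms(3,4) dpos by simp
  then have "a - d*p < d" using s by linarith
  then have "a mod d = a - d*p" using s0
    by (metis add.commute diff_add_cancel mod_mult_self2 mod_pos_pos_trivial)
  have "real_of_int (a mod d) = d*u" using s \<open>a mod d = a - d*p\<close> by simp
  then show ?thesis using \<open>real_of_int (a - d*p) \<ge> 0\<close> s \<open>d*u < d*\<epsilon>\<close> by (simp add: mult.commute)
next
  case False
  have s: "real_of_int (a - d*(p-1)) = d*(1+u)" using assms(2) by (simp add: algebra_simps)
  have dpos: "real_of_int d > 0" using assms(1) by simp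
  have "1+u > 0" using assms(3,4) by simp
  then have "real_of_int (a - d*(p-1)) > 0" using s dpos by simp
  then have s0: "a - d*(p-1) \<ge> 0" by linarith
  have lt: "real_of_int d * (1+u) < d" using False dpos by simp
  then have "a - d*(p-1) < d" using s by linarith
  then have eq: "a mod d = a - d*(p-1)" using s0
    by (metis add.commute diff_add_cancel mod_mult_self2 mod_pos_pos_trivial)
  have "1 - \<epsilon> < 1 + u" using assms(3) False by simp
  then have "(1 - \<epsilon>) * d < d*(1+u)" using dpos by (simp add: mult.commute)
  then show ?thesis using s lt eq by (simp add: mult.commute)
qed

lemma pigeon:
  fixes K L :: nat and \<alpha> :: "nat \<Rightarrow> real" and A :: "nat set"
  assumes "K \<ge> 1" "finite A" "card A = L"
  shows "\<exists>m::nat. 1 \<le> m \<and> m \<le> K^L \<and> (\<forall>j\<in>A. \<exists>p::int. \<bar>real m * \<alpha> j - p\<bar> < 1/K)"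
proof -
  define g where "g i = restrict (\<lambda>j. nat \<lfloor>K * frac (real i * \<alpha> j)\<rfloor>) A" for i::nat
  have img: "g ` {0..K^L} \<subseteq> PiE A (\<lambda>_. {..<K})"
  proof
    fix y assume "y \<in> g ` {0..K^L}"
    then obtain i where y: "y = g i" by auto
    have "nat \<lfloor>K * frac (real i * \<alpha> j)\<rfloor> < K" for j
    proof -
      have "frac (real i * \<alpha> j) < 1" by (simp add: frac_lt_1)
      then have "K * frac (real i * \<alpha> j) < K" using assms(1) by simp
      then show ?thesis using assms(1) by (simp add: floor_less_iff nat_less_iff)
    qed
    then show "y \<in> PiE A (\<lambda>_. {..<K})" unfolding y g_def by auto
  qed
  have cP: "card (PiE A (\<lambda>_. {..<K})) = K^L" by (simp add: card_PiE assms)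
  have "\<not> inj_on g {0..K^L}"
  proof
    assume "inj_on g {0..K^L}"
    then have "card (g ` {0..K^L}) = K^L + 1" by (simp add: card_image)
    moreover have "card (g ` {0..K^L}) \<le> K^L"
      using card_mono[OF finite_PiE img] cP assms(2) by simp
    ultimately show False by simp
  qed
  then obtain i i' where ii: "i \<in> {0..K^L}" "i' \<in> {0..K^L}" "i \<noteq> i'" "g i = g i'"
    by (auto simp: inj_on_def)
  obtain a b where ab: "a < b" "b \<le> K^L" "g a = g b"
  proof (cases "i < i'")
    case True then show ?thesis using ii that by auto
  next
    case False then show ?thesis using ii that[of i' i] by auto
  qed
  have "\<forall>j\<in>A. \<exists>p::int. \<bar>real (b - a) * \<alpha> j - p\<bar> < 1/K"
  proof
    fix j assume j: "j \<in> A"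
    have "nat \<lfloor>K * frac (real a * \<alpha> j)\<rfloor> = nat \<lfloor>K * frac (real b * \<alpha> j)\<rfloor>"
    proof -
      have "g a j = g b j" using ab(3) by simp
      then show ?thesis using j unfolding g_def by simp
    qed
    moreover have "\<lfloor>K * frac (real a * \<alpha> j)\<rfloor> \<ge> 0" "\<lfloor>K * frac (real b * \<alpha> j)\<rfloor> \<ge> 0"
      by (simp_all add: frac_ge_0)
    ultimately have "\<lfloor>K * frac (real b * \<alpha> j)\<rfloor> = \<lfloor>K * frac (real a * \<alpha> j)\<rfloor>" by (metis eq_nat_nat_iff)
    then have c: "\<bar>frac (real b * \<alpha> j) - frac (real a * \<alpha> j)\<bar> < 1/K"
      using floor_close[of "real K"] assms(1) by simp
    have "real (b - a) * \<alpha> j - of_int (\<lfloor>real b * \<alpha> j\<rfloor> - \<lfloor>real a * \<alpha> j\<rfloor>)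
         = frac (real b * \<alpha> j) - frac (real a * \<alpha> j)"
    proof -
      have "real (b - a) = real b - real a" using ab(1) by simp
      then show ?thesis unfolding frac_def by (simp add: algebra_simps)
    qed
    then show "\<exists>p::int. \<bar>real (b - a) * \<alpha> j - p\<bar> < 1/K" using c by metis
  qed
  then show ?thesis using ab by (intro exI[of _ "b - a"]) auto
qed


theorem lemma3:
  fixes k N :: nat and \<epsilon> :: real and n :: "nat \<Rightarrow> nat"
  assumes "k \<ge> 1" and "N \<ge> 1"
    and "0 < \<epsilon>" and "\<epsilon> \<le> 1/2"
    and "\<And>i j. 1 \<le> i \<Longrightarrow> i < j \<Longrightarrow> j \<le> k \<Longrightarrow> n i < n j"
    and "n k \<le> N"
    and "real (n k) \<ge> V \<epsilon> k"
  shows "\<exists>d::int. real (n k) / (real (kappa \<epsilon>) ^ (k - 1) + \<epsilon>) < real_of_int d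
            \<and> real_of_int d < real (n k) / (1 - \<epsilon>)
            \<and> (\<forall>j \<in> {1..k}.
                 (0 \<le> real_of_int (int (n j) mod d) \<and> real_of_int (int (n j) mod d) < \<epsilon> * d)
               \<or> ((1 - \<epsilon>) * d < real_of_int (int (n j) mod d) \<and> real_of_int (int (n j) mod d) < d))"
proof -
  define K where "K = kappa \<epsilon>"
  define M where "M = K^(k-1)"
  define \<eta> where "\<eta> = \<epsilon> - 1 / real K"
  define nk where "nk = real (n k)"
  have fl: "\<lfloor>1/\<epsilon>\<rfloor> \<ge> 0" using assms(3) by simp
  have Kr: "real K = real_of_int \<lfloor>1/\<epsilon>\<rfloor> + 1" unfolding K_def kappa_def using fl by simp
  have K1: "K \<ge> 1" unfolding K_def kappa_def by simp
  have "real K > 1/\<epsilon>" using Kr real_of_int_floor_add_one_gt[of "1/\<epsilon>"] by linarith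
  then have "\<epsilon> * real K > 1" using assms(3) by (simp add: field_simps)
  then have "1 / real K < \<epsilon>" using K1 by (simp add: field_simps)
  then have eta_pos: "\<eta> > 0" unfolding \<eta>_def by simp
  have eta_lt: "\<eta> < \<epsilon>" unfolding \<eta>_def using K1 by simp
  have eta1: "\<eta> < 1" using eta_lt assms(4) by simp
  have Vge: "V \<epsilon> k \<ge> real M ^ 2 / 2 * inverse \<eta>" "V \<epsilon> k \<ge> real M + \<epsilon>"
  proof -
    have "real K ^ (2*k - 2) = real M ^ 2" unfolding M_def
      by (simp add: power_mult[symmetric] mult.commute right_diff_distrib')
    then show "V \<epsilon> k \<ge> real M ^ 2 / 2 * inverse \<eta>" "V \<epsilon> k \<ge> real M + \<epsilon>"
      unfolding V_def \<eta>_def K_def[symmetric] M_def by auto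
  qed
  have big: "2 * \<eta> * nk \<ge> real M ^ 2"
  proof -
    have "nk \<ge> real M ^ 2 / 2 * inverse \<eta>" using Vge assms(7) unfolding nk_def by linarith
    then show ?thesis using eta_pos by (simp add: field_simps)
  qed
  have nkM: "nk \<ge> real M + \<epsilon>" using Vge assms(7) unfolding nk_def by linarith
  then have nkpos: "nk > 0" using assms(3) by simp
  have nj_le: "real (n j) \<le> nk" if "j \<in> {1..k}" for j
  proof (cases "j = k")
    case False then show ?thesis using assms(5)[of j k] that unfolding nk_def by auto
  qed (simp add: nk_def)
  obtain m where m: "1 \<le> m" "m \<le> K^card {1..<k}"
    "\<forall>j\<in>{1..<k}. \<exists>p::int. \<bar>real m * (real (n j) / nk) - p\<bar> < 1/K"
    using pigeon[OF K1, of "{1..<k}" "card {1..<k}" "\<lambda>j. real (n j) / nk"] by auto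
  have mM: "m \<le> M" using m(2) unfolding M_def by simp
  have mpos: "real m > 0" using m(1) by simp
  have approx: "\<forall>j\<in>{1..k}. \<exists>p::int. \<bar>real m * (real (n j) / nk) - p\<bar> < 1/K"
  proof
    fix j assume j: "j \<in> {1..k}"
    show "\<exists>p::int. \<bar>real m * (real (n j) / nk) - p\<bar> < 1/K"
    proof (cases "j = k")
      case True
      then have "real m * (real (n j) / nk) - of_int (int m) = 0" using nkpos unfolding nk_def by simp
      then show ?thesis using K1 by (metis abs_zero of_nat_0_less_iff of_nat_1 less_le_trans zero_less_one divide_pos_pos)
    next
      case False then show ?thesis using j m(3) by auto
    qed
  qed
  define d :: int where "d = (2*int (n k) + int m) div (2*int m)"
  define r :: int where "r = int (n k) - int m * d"
  have dm1: "2*int m * d \<le> 2*int (n k) + int m" "2*int (n k) + int m < 2*int m * d + 2*int m"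
  proof -
    have "2*int (n k) + int m = 2*int m * d + (2*int (n k) + int m) mod (2*int m)"
      unfolding d_def by simp
    moreover have "0 \<le> (2*int (n k) + int m) mod (2*int m)" "(2*int (n k) + int m) mod (2*int m) < 2*int m"
      using m(1) by simp_all
    ultimately show "2*int m * d \<le> 2*int (n k) + int m" "2*int (n k) + int m < 2*int m * d + 2*int m"
      by linarith+
  qed
  have r1: "- int m \<le> 2*r" "2*r < int m" using dm1 unfolding r_def by (simp_all add: algebra_simps)
  have "real m \<le> nk" using nkM mM assms(3) by simp
  then have "int m \<le> int (n k)" unfolding nk_def by simp
  then have "int m < 2 * int m * d" using dm1(2) by linarith
  then have dpos: "d > 0"
  proof (rule contrapos_pp)
    assume "\<not> d > 0"
    then have "2*int m*d \<le> 0" using m(1) by (simp add: mult_nonneg_nonpos)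
    then show "\<not> int m < 2 * int m * d" using m(1) by linarith
  qed
  define D where "D = real_of_int d"
  define R where "R = real_of_int r"
  have Dpos: "D > 0" using dpos unfolding D_def by simp
  have nkeq: "nk = real m * D + R" unfolding nk_def D_def R_def r_def by simp
  have mM2: "real m ^ 2 \<le> real M ^ 2" using mM by (simp add: power_mono)
  have key: "\<bar>R\<bar> \<le> \<eta> * D"
  proof (cases "R \<le> 0")
    case True
    have "- 2 * R \<le> real m" using r1(1) unfolding R_def by linarith
    have "\<eta> * (real m * D) \<ge> \<eta> * nk" using True nkeq eta_pos by (simp add: mult_left_mono)
    then have "2 * \<eta> * D * real m \<ge> real m * real m" using big mM2 by (simp add: power2_eq_square algebra_simps)
    then have "2 * \<eta> * D \<ge> real m" using mpos by (simp add: mult_le_cancel_right)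
    then show ?thesis using True \<open>- 2 * R \<le> real m\<close> by simp
  next
    case False
    have "2 * r \<le> int m - 1" using r1(2) by linarith
    then have r2: "2 * R \<le> real m - 1" unfolding R_def by linarith
    have "2 * R * (real m + \<eta>) \<le> (real m - 1) * (real m + \<eta>)"
      by (rule mult_right_mono[OF r2]) (use eta_pos mpos in linarith)
    also have "\<dots> \<le> real m * real m"
    proof -
      have "\<eta> * real m \<le> 1 * real m" using eta1 mpos by (intro mult_right_mono) simp_all
      moreover have "(real m - 1) * (real m + \<eta>) = real m * real m + (\<eta> * real m - real m) - \<eta>"
        by (simp add: algebra_simps)
      ultimately show ?thesis using eta_pos by linarith
    qed
    finally have "2 * R * (real m + \<eta>) \<le> real m * real m" .
    then have "real m * R \<le> \<eta> * (nk - R)" using big mM2 by (simp add: power2_eq_square algebra_simps)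
    then have "real m * R \<le> real m * (\<eta> * D)" using nkeq by (simp add: algebra_simps)
    then have "R \<le> \<eta> * D" using mpos by simp
    then show ?thesis using False by simp
  qed
  have modok: "(0 \<le> real_of_int (int (n j) mod d) \<and> real_of_int (int (n j) mod d) < \<epsilon> * d)
               \<or> ((1 - \<epsilon>) * d < real_of_int (int (n j) mod d) \<and> real_of_int (int (n j) mod d) < d)"
    if j: "j \<in> {1..k}" for j
  proof -
    have "\<exists>p::int. \<bar>real m * (real (n j) / nk) - p\<bar> < 1/K" using approx j by blast
    then obtain p :: int where p: "\<bar>real m * (real (n j) / nk) - p\<bar> < 1/K" by blast
    define u where "u = (real m * (real (n j) / nk) - p) + real (n j) * R / (D * nk)"
    have "\<bar>real (n j) * R / (D * nk)\<bar> = (real (n j) / nk) * (\<bar>R\<bar> / D)"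
      using Dpos nkpos by (simp add: abs_mult)
    also have "\<dots> \<le> 1 * (\<bar>R\<bar> / D)"
      using nj_le[OF j] nkpos Dpos by (intro mult_right_mono) simp_all
    also have "\<dots> \<le> \<eta>" using key Dpos by (simp add: field_simps)
    finally have "\<bar>real (n j) * R / (D * nk)\<bar> \<le> \<eta>" .
    then have u: "\<bar>u\<bar> < \<epsilon>" using p unfolding u_def \<eta>_def by linarith
    have "D * (real_of_int p + u) = real m * D * real (n j) / nk + real (n j) * R / nk"
      unfolding u_def using Dpos by (simp add: field_simps)
    also have "\<dots> = real (n j) * (real m * D + R) / nk" by (simp add: add_divide_distrib[symmetric] algebra_simps)
    also have "\<dots> = real (n j)" using nkeq nkpos by simp
    finally have "real_of_int (int (n j)) = real_of_int d * (real_of_int p + u)" unfolding D_def by simp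
    then show ?thesis using mod_lemma[OF dpos _ u assms(4)] by blast
  qed
  have i1: "nk / (real M + \<epsilon>) < D"
  proof -
    have "nk \<le> D * (real m + \<eta>)" using nkeq key by (simp add: algebra_simps)
    also have "\<dots> < D * (real M + \<epsilon>)" using Dpos mM eta_lt by simp
    finally show ?thesis using assms(3) by (simp add: field_simps)
  qed
  have i2: "D < nk / (1 - \<epsilon>)"
  proof -
    have "D * (1 - \<epsilon>) < D * (real m - \<eta>)" using Dpos m(1) eta_lt by simp
    also have "\<dots> \<le> nk" using nkeq key by (simp add: algebra_simps)
    finally show ?thesis using assms(4) by (simp add: field_simps)
  qed
  show ?thesis
    apply (rule exI[of _ d])
    using i1 i2 modok unfolding D_def nk_def M_def K_def of_nat_power by blast
qed

end
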